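(* Let $G$ be a finite non-identity permutation group acting on a finite set $V$, let $\delta$ be the minimum degree of $G$, and suppose the distinguishing number of $G$ is at least $3$. Then $|G| \ge 1 + 2^{\delta/2}$.
   Context: For a permutation group $G$ acting on a set $V$, a partition $\pi$ of $V$ is distinguishing if the only element of $G$ fixing each cell of $\pi$ (setwise) is the identity. The distinguishing number of $G$ is the minimum number of cells in a distinguishing partition. The minimum degree of $G$ is the minimum, over non-identity elements $g\in G$, of the number of points of $V$ moved by $g$. *)

theory Defs
  imports Complex_Main "HOL-Library.Disjoint_Sets" "HOL-Combinatorics.Permutations"
begin

definition perm_group :: "('a \<Rightarrow> 'a) set \<Rightarrow> 'a set \<Rightarrow> bool" where
  "perm_group G V \<longleftrightarrow> (\<forall>g\<in>G. g permutes V) \<and> id \<in> G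
     \<and> (\<forall>g\<in>G. \<forall>h\<in>G. g \<circ> h \<in> G) \<and> (\<forall>g\<in>G. inv g \<in> G)"

definition distinguishing :: "('a \<Rightarrow> 'a) set \<Rightarrow> 'a set set \<Rightarrow> bool" where
  "distinguishing G P \<longleftrightarrow> (\<forall>g\<in>G. (\<forall>C\<in>P. g ` C = C) \<longrightarrow> g = id)"

definition distinguishing_number :: "('a \<Rightarrow> 'a) set \<Rightarrow> 'a set \<Rightarrow> nat" where
  "distinguishing_number G V =
     (LEAST k. \<exists>P. partition_on V P \<and> distinguishing G P \<and> card P = k)"

definition moved_points :: "('a \<Rightarrow> 'a) \<Rightarrow> 'a set \<Rightarrow> 'a set" where
  "moved_points g V = {v\<in>V. g v \<noteq> v}"

definition minimum_degree :: "('a \<Rightarrow> 'a) set \<Rightarrow> 'a set \<Rightarrow> nat" where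
  "minimum_degree G V = Min {card (moved_points g V) | g. g \<in> G \<and> g \<noteq> id}"

end

theory Submission
  imports Defs "HOL-Combinatorics.Cycles"
begin

lemma inv_iter:
  assumes "g permutes V" "g ` T = T"
  shows "(g ^^ k) x \<in> T \<longleftrightarrow> x \<in> T"
proof (induction k)
  case 0 then show ?case by simp
next
  case (Suc k)
  have step: "g y \<in> T \<longleftrightarrow> y \<in> T" for y
  proof
    assume "g y \<in> T"
    then have "g y \<in> g ` T" using assms(2) by simp
    then show "y \<in> T" using permutes_inj[OF assms(1)] by (auto dest: injD)
  next
    assume "y \<in> T" then show "g y \<in> T" using assms(2) by blast
  qed
  show ?case using Suc step by simp
qed

lemma count_inv:
  assumes fin: "finite V" and perm: "g permutes V"
  shows "real (card {T. T \<subseteq> V \<and> g ` T = T})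
           \<le> 2 powr (real (card V) - real (card (moved_points g V)) / 2)"
proof -
  define M where "M = moved_points g V"
  have MV: "M \<subseteq> V" unfolding M_def moved_points_def by auto
  have finM: "finite M" using MV fin finite_subset by blast
  have injg: "inj g" using permutes_inj[OF perm] .
  have gM: "g ` M \<subseteq> M"
  proof
    fix y assume "y \<in> g ` M"
    then obtain x where x: "x \<in> M" "y = g x" by blast
    have "g x \<in> V" using x MV permutes_in_image[OF perm] by auto
    moreover have "g (g x) \<noteq> g x" using x injg unfolding M_def moved_points_def
      by (auto dest: injD)
    ultimately show "y \<in> M" using x unfolding M_def moved_points_def by auto
  qed
  obtain p where p: "(g ^^ p) = id" "p > 0"
    using permutation_is_nilpotent permutes_imp_permutation[OF fin perm] by blast
  define F where "F = {A. A \<subseteq> M \<and> A \<inter> g ` A = {}}"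
  have finF: "finite F" unfolding F_def using finM by (auto intro: finite_subset[of _ "Pow M"])
  have "{} \<in> F" unfolding F_def by auto
  then have "Max (card ` F) \<in> card ` F" using finF by (intro Max_in) auto
  then obtain A where AF: "A \<in> F" and Amax: "card A = Max (card ` F)" by auto
  have Amax': "card B \<le> card A" if "B \<in> F" for B
    using that finF Amax by simp
  have AM: "A \<subseteq> M" and Adisj: "A \<inter> g ` A = {}" using AF F_def by auto
  have hit: "\<exists>k. (g ^^ k) x \<in> A" if xM: "x \<in> M" for x
  proof (rule ccontr)
    assume "\<not> ?thesis"
    then have no: "\<And>k. (g ^^ k) x \<notin> A" by blast
    have xA: "x \<notin> A" using no[of 0] by simp
    have gxA: "g x \<notin> A" using no[of 1] by simp
    have xgx: "x \<noteq> g x" using xM unfolding M_def moved_points_def by auto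
    have xgA: "x \<notin> g ` A"
    proof
      assume "x \<in> g ` A"
      then obtain a where a: "a \<in> A" "x = g a" by blast
      have "(g ^^ (p - 1)) x = (g ^^ (p - 1)) (g a)" using a by simp
      also have "\<dots> = (g ^^ (Suc (p - 1))) a" by (simp add: funpow_Suc_right del: funpow.simps)
      also have "\<dots> = a" using p by simp
      finally show False using no[of "p - 1"] a by simp
    qed
    have "insert x A \<in> F" unfolding F_def using AM xM Adisj gxA xgx xgA by auto
    then have "card (insert x A) \<le> card A" by (rule Amax')
    moreover have "card (insert x A) = card A + 1"
      using xA finite_subset[OF AM finM] by simp
    ultimately show False by simp
  qed
  define A' where "A' = (V - M) \<union> A"
  have hit': "\<exists>k. (g ^^ k) x \<in> A'" if "x \<in> V" for x
  proof (cases "x \<in> M")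
    case True then show ?thesis using hit A'_def by blast
  next
    case False then have "(g ^^ 0) x \<in> A'" using that A'_def by simp
    then show ?thesis by blast
  qed
  define Inv where "Inv = {T. T \<subseteq> V \<and> g ` T = T}"
  have inj: "inj_on (\<lambda>T. T \<inter> A') Inv"
  proof (rule inj_onI)
    fix T1 T2 assume T1: "T1 \<in> Inv" and T2: "T2 \<in> Inv" and eq: "T1 \<inter> A' = T2 \<inter> A'"
    show "T1 = T2"
    proof (rule set_eqI)
      fix x
      show "x \<in> T1 \<longleftrightarrow> x \<in> T2"
      proof (cases "x \<in> V")
        case True
        then obtain k where k: "(g ^^ k) x \<in> A'" using hit' by blast
        have "x \<in> T1 \<longleftrightarrow> (g ^^ k) x \<in> T1" using inv_iter[OF perm] T1 Inv_def by auto
        also have "\<dots> \<longleftrightarrow> (g ^^ k) x \<in> T2" using eq k by blast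
        also have "\<dots> \<longleftrightarrow> x \<in> T2" using inv_iter[OF perm] T2 Inv_def by auto
        finally show ?thesis .
      next
        case False then show ?thesis using T1 T2 Inv_def by auto
      qed
    qed
  qed
  have finA': "finite A'" unfolding A'_def using fin finite_subset[OF AM finM] by auto
  have "(\<lambda>T. T \<inter> A') ` Inv \<subseteq> Pow A'" by auto
  then have "card Inv \<le> card (Pow A')"
    using inj finA' by (metis card_inj_on_le finite_Pow_iff)
  also have "\<dots> = 2 ^ card A'" by (rule card_Pow[OF finA'])
  finally have c1: "card Inv \<le> 2 ^ card A'" .
  have finA: "finite A" using finite_subset[OF AM finM] .
  have "card (A \<union> g ` A) = card A + card (g ` A)"
    using Adisj finA by (simp add: card_Un_disjoint)
  also have "card (g ` A) = card A" using injg by (simp add: card_image inj_on_subset)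
  finally have "card (A \<union> g ` A) = 2 * card A" by simp
  moreover have "A \<union> g ` A \<subseteq> M" using AM gM by blast
  ultimately have c2: "2 * card A \<le> card M" using card_mono[OF finM] by metis
  have "card A' = card (V - M) + card A"
    unfolding A'_def using AM fin finA by (subst card_Un_disjoint) auto
  also have "card (V - M) = card V - card M" using MV finM by (simp add: card_Diff_subset)
  finally have c3: "card A' = card V - card M + card A" .
  have cMV: "card M \<le> card V" using card_mono[OF fin MV] .
  have "real (card A') \<le> real (card V) - real (card M) / 2"
    using c2 c3 cMV by simp
  then have "2 powr real (card A') \<le> 2 powr (real (card V) - real (card M) / 2)"
    by (intro powr_mono) auto
  moreover have "real (card Inv) \<le> 2 powr real (card A')"
    using c1 by (simp add: powr_realpow)
  ultimately show ?thesis unfolding Inv_def M_def by linarith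
qed

theorem lemma1:
  fixes G :: "('a \<Rightarrow> 'a) set" and V :: "'a set"
  assumes "finite V"
    and "perm_group G V"
    and "G \<noteq> {id}"
    and "distinguishing_number G V \<ge> 3"
  shows "real (card G) \<ge> 1 + 2 powr (real (minimum_degree G V) / 2)"
proof -
  let ?n = "card V"
  let ?d = "minimum_degree G V"
  have permG: "\<And>g. g \<in> G \<Longrightarrow> g permutes V" and idG: "id \<in> G"
    using assms(2) unfolding perm_group_def by auto
  have Vne: "V \<noteq> {}"
  proof
    assume "V = {}"
    then have "G \<subseteq> {id}" using permG by auto
    then show False using idG assms(3) by auto
  qed
  have finG: "finite G"
    by (rule finite_subset[OF _ finite_permutations[OF assms(1)]]) (auto intro: permG)
  define I where "I = (\<lambda>g. {T. T \<subseteq> V \<and> g ` T = T})"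
  have key: "\<exists>g\<in>G - {id}. S \<in> I g" if SV: "S \<subseteq> V" for S
  proof -
    define P where "P = {S, V - S} - {{}}"
    have part: "partition_on V P"
      unfolding partition_on_def P_def disjoint_def using SV by auto
    have "card P \<le> card {S, V - S}" unfolding P_def by (rule card_Diff_subset_Int[THEN eq_refl, THEN order_trans] | rule card_mono) auto
    also have "\<dots> \<le> 2" by (rule order_trans[OF card_insert_le_m1]) auto
    finally have cP: "card P \<le> 2" .
    have "\<not> distinguishing G P"
    proof
      assume "distinguishing G P"
      then have "distinguishing_number G V \<le> card P"
        unfolding distinguishing_number_def using part by (intro Least_le) blast
      then show False using cP assms(4) by simp
    qed
    then obtain g where g: "g \<in> G" "\<forall>C\<in>P. g ` C = C" "g \<noteq> id"
      unfolding distinguishing_def by blast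
    have "g ` S = S"
    proof (cases "S = {}")
      case False then have "S \<in> P" unfolding P_def by auto
      then show ?thesis using g by auto
    qed auto
    then show ?thesis using g SV I_def by auto
  qed
  have fin2: "finite (G - {id})" using finG by auto
  have "Pow V \<subseteq> (\<Union>g\<in>G - {id}. I g)" using key by blast
  then have "card (Pow V) \<le> card (\<Union>g\<in>G - {id}. I g)"
    using fin2 I_def assms(1) by (intro card_mono) auto
  also have "\<dots> \<le> (\<Sum>g\<in>G - {id}. card (I g))" by (rule card_UN_le[OF fin2])
  finally have "real (2 ^ ?n) \<le> real (\<Sum>g\<in>G - {id}. card (I g))"
    using card_Pow assms(1) by (metis of_nat_le_iff)
  also have "\<dots> = (\<Sum>g\<in>G - {id}. real (card (I g)))" by simp
  also have "\<dots> \<le> (\<Sum>g\<in>G - {id}. 2 powr (real ?n - real ?d / 2))"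
  proof (rule sum_mono)
    fix g assume g: "g \<in> G - {id}"
    have "?d \<le> card (moved_points g V)"
      unfolding minimum_degree_def using g finG by (intro Min_le) auto
    then have "2 powr (real ?n - real (card (moved_points g V)) / 2) \<le> 2 powr (real ?n - real ?d / 2)"
      by (intro powr_mono) auto
    then show "real (card (I g)) \<le> 2 powr (real ?n - real ?d / 2)"
      using count_inv[OF assms(1) permG] g unfolding I_def by (meson DiffD1 order_trans)
  qed
  also have "\<dots> = real (card G - 1) * 2 powr (real ?n - real ?d / 2)"
    using finG idG by (simp add: card_Diff_singleton)
  finally have ineq: "2 powr real ?n \<le> real (card G - 1) * (2 powr real ?n / 2 powr (real ?d / 2))"
    by (simp add: powr_diff powr_realpow)
  have pos: "2 powr real ?n > 0" by simp
  have "2 powr (real ?d / 2) \<le> real (card G - 1)"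
    using ineq pos by (simp add: field_simps)
  moreover have "card G \<ge> 1" using finG idG by (metis card_0_eq empty_iff less_one not_le)
  ultimately show ?thesis by (simp add: of_nat_diff)
qed

end
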